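(* For $n\ge 0$ let $s_n=\sum_{r=0}^{n}1/r!$ be the $n$th partial sum of the Taylor series $e=\sum_{r\ge 0}1/r!$. For every $n\ge 0$, at most two of the three numbers $s_n, s_{n+1}, s_{n+2}$ are convergents of the simple continued fraction expansion of $e$.
   Context: The convergents of $e$ are the rationals obtained by truncating the simple continued fraction expansion of $e$; a partial sum $s_n$ "is a convergent" if it equals one of these rationals. *)

theory Defs
  imports Complex_Main
begin

fun cf_rem :: "real \<Rightarrow> nat \<Rightarrow> real" where
  "cf_rem x 0 = x"
| "cf_rem x (Suc k) = 1 / (cf_rem x k - of_int \<lfloor>cf_rem x k\<rfloor>)"

definition cf_digit :: "real \<Rightarrow> nat \<Rightarrow> int" where
  "cf_digit x k = \<lfloor>cf_rem x k\<rfloor>"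

fun cf_eval :: "int list \<Rightarrow> real" where
  "cf_eval [] = 0"
| "cf_eval [a] = of_int a"
| "cf_eval (a # b # rest) = of_int a + 1 / cf_eval (b # rest)"

definition convergent :: "real \<Rightarrow> nat \<Rightarrow> real" where
  "convergent x n = cf_eval (map (cf_digit x) [0..<Suc n])"

definition is_convergent_of :: "real \<Rightarrow> real \<Rightarrow> bool" where
  "is_convergent_of x q \<longleftrightarrow> (\<exists>n. q = convergent x n)"

definition e_partial :: "nat \<Rightarrow> real" where
  "e_partial n = (\<Sum>r=0..n. 1 / fact r)"

end

theory Submission
  imports Defs
begin


lemma cf_rem_shift: "cf_rem x (Suc k) = cf_rem (cf_rem x 1) k"
  by (induction k) auto

lemma cf_digit_shift: "cf_digit x (Suc k) = cf_digit (cf_rem x 1) k"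
  unfolding cf_digit_def using cf_rem_shift by simp

lemma convergent_0: "convergent x 0 = of_int (cf_digit x 0)"
  unfolding convergent_def by simp

lemma convergent_Suc:
  "convergent x (Suc n) = of_int (cf_digit x 0) + 1 / convergent (cf_rem x 1) n"
proof -
  have "[0..<Suc (Suc n)] = 0 # map Suc [0..<Suc n]"
    by (simp add: upt_conv_Cons map_Suc_upt del: upt_Suc)
  then have "map (cf_digit x) [0..<Suc (Suc n)] = cf_digit x 0 # map (cf_digit (cf_rem x 1)) [0..<Suc n]"
    by (simp add: cf_digit_shift comp_def del: upt_Suc)
  moreover have "map (cf_digit (cf_rem x 1)) [0..<Suc n] = cf_digit (cf_rem x 1) 0 # map (cf_digit (cf_rem x 1)) [1..<Suc n]"
    by (simp add: upt_conv_Cons del: upt_Suc)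
  ultimately show ?thesis unfolding convergent_def by (simp del: upt_Suc)
qed

lemma irr_step:
  fixes z :: real assumes "z \<notin> \<rat>"
  shows "1 / (z - of_int \<lfloor>z\<rfloor>) \<notin> \<rat>" "1 / (z - of_int \<lfloor>z\<rfloor>) > 1"
proof -
  have ne: "z \<noteq> of_int \<lfloor>z\<rfloor>" using assms by (metis Rats_of_int)
  have lt: "z - of_int \<lfloor>z\<rfloor> < 1" by linarith
  have gt: "z - of_int \<lfloor>z\<rfloor> > 0" using ne by linarith
  show "1 / (z - of_int \<lfloor>z\<rfloor>) > 1" using lt gt by simp
  show "1 / (z - of_int \<lfloor>z\<rfloor>) \<notin> \<rat>"
  proof
    assume "1 / (z - of_int \<lfloor>z\<rfloor>) \<in> \<rat>"
    then have "1 / (1 / (z - of_int \<lfloor>z\<rfloor>)) \<in> \<rat>" by (rule Rats_divide[OF Rats_1])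
    then have "z - of_int \<lfloor>z\<rfloor> \<in> \<rat>" by simp
    then have "z - of_int \<lfloor>z\<rfloor> + of_int \<lfloor>z\<rfloor> \<in> \<rat>" by (intro Rats_add) auto
    then show False using assms by simp
  qed
qed

lemma cf_rem_irr: "x \<notin> \<rat> \<Longrightarrow> cf_rem x k \<notin> \<rat>"
  by (induction k) (auto dest: irr_step)

lemma cf_rem_gt1: "x \<notin> \<rat> \<Longrightarrow> cf_rem x (Suc k) > 1"
  using irr_step(2)[OF cf_rem_irr] by simp

lemma claim:
  "\<forall>x::real. x \<notin> \<rat> \<longrightarrow> x > 1 \<longrightarrow> (\<exists>(p::int) (q::int) (p'::int) (q'::int). q \<ge> (1::int) \<and> p \<ge> (1::int) \<and> p' \<ge> (0::int) \<and> q' \<ge> (0::int) \<and>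
     convergent x n = p / q \<and>
     x = (p * cf_rem x (Suc n) + p') / (q * cf_rem x (Suc n) + q') \<and> \<bar>p * q' - p' * q\<bar> = (1::int))"
proof (induction n)
  case 0
  show ?case
  proof (intro allI impI)
    fix x :: real assume x: "x \<notin> \<rat>" "x > 1"
    define a where "a = \<lfloor>x\<rfloor>"
    have a1: "a \<ge> 1" using x unfolding a_def by linarith
    have ne: "x - of_int a \<noteq> 0" using x unfolding a_def by (metis Rats_of_int eq_iff_diff_eq_0)
    have "cf_rem x 1 = 1 / (x - of_int a)" by (simp add: a_def)
    then have "x = (of_int a * cf_rem x 1 + 1) / (1 * cf_rem x 1 + 0)"
      using ne by (simp add: field_simps)
    then show "\<exists>(p::int) (q::int) (p'::int) (q'::int). q \<ge> (1::int) \<and> p \<ge> (1::int) \<and> p' \<ge> (0::int) \<and> q' \<ge> (0::int) \<and>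
     convergent x 0 = p / q \<and>
     x = (p * cf_rem x (Suc 0) + p') / (q * cf_rem x (Suc 0) + q') \<and> \<bar>p * q' - p' * q\<bar> = (1::int)"
      using a1 by (intro exI[of _ a] exI[of _ 1] exI[of _ 1] exI[of _ 0])
        (simp add: convergent_0 cf_digit_def a_def)
  qed
next
  case (Suc n)
  show ?case
  proof (intro allI impI)
    fix x :: real assume x: "x \<notin> \<rat>" "x > 1"
    define a where "a = \<lfloor>x\<rfloor>"
    define y where "y = cf_rem x 1"
    have a1: "a \<ge> 1" using x unfolding a_def by linarith
    have ne: "x - of_int a \<noteq> 0" using x unfolding a_def by (metis Rats_of_int eq_iff_diff_eq_0)
    have y: "y = 1 / (x - of_int a)" by (simp add: a_def y_def)
    have yirr: "y \<notin> \<rat>" "y > 1" using irr_step[OF x(1)] by (auto simp: y a_def)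
    obtain p q p' q' :: int where H: "q \<ge> 1" "p \<ge> 1" "p' \<ge> 0" "q' \<ge> 0"
      "convergent y n = p / q" "y = (p * cf_rem y (Suc n) + p') / (q * cf_rem y (Suc n) + q')"
      "\<bar>p * q' - p' * q\<bar> = (1::int)"
      using Suc.IH[rule_format, OF yirr] by blast
    define b where "b = cf_rem x (Suc (Suc n))"
    have b: "cf_rem y (Suc n) = b" unfolding b_def y_def by (simp only: cf_rem_shift[of x "Suc n"])
    have b1: "b > 1" unfolding b_def using cf_rem_gt1[OF x(1)] by blast
    have "of_int p * b > 0" using H(2) b1 by simp
    moreover have "(of_int p' :: real) \<ge> 0" using H(3) by simp
    ultimately have den: "p * b + p' > 0" by linarith
    have "convergent x (Suc n) = of_int a + 1 / convergent y n"
      by (simp add: convergent_Suc cf_digit_def a_def y_def)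
    also have "\<dots> = of_int a + of_int q / of_int p" using H(5) by simp
    also have "\<dots> = of_int (a * p + q) / of_int p" using H(2) by (simp add: field_simps)
    finally have conv: "convergent x (Suc n) = of_int (a * p + q) / of_int p" .
    have xy: "x = of_int a + 1 / y" using ne by (simp add: y)
    have yb: "y = (p * b + p') / (q * b + q')" using H(6) by (simp only: b)
    have "x = of_int a + (q * b + q') / (p * b + p')"
      using xy unfolding yb by simp
    also have "\<dots> = ((a * p + q) * b + (a * p' + q')) / (p * b + p')"
      using den by (simp add: field_simps)
    finally have xe: "x = ((a * p + q) * cf_rem x (Suc (Suc n)) + (a * p' + q')) / (p * cf_rem x (Suc (Suc n)) + p')"
      by (simp add: b_def)
    have det: "\<bar>(a * p + q) * p' - (a * p' + q') * p\<bar> = 1"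
      using H(7) by (simp add: algebra_simps abs_minus_commute)
    have ap: "a * p \<ge> 1 * 1" by (rule mult_mono) (use a1 H in auto)
    show "\<exists>(p::int) (q::int) (p'::int) (q'::int). q \<ge> (1::int) \<and> p \<ge> (1::int) \<and> p' \<ge> (0::int) \<and> q' \<ge> (0::int) \<and>
     convergent x (Suc n) = p / q \<and>
     x = (p * cf_rem x (Suc (Suc n)) + p') / (q * cf_rem x (Suc (Suc n)) + q') \<and> \<bar>p * q' - p' * q\<bar> = (1::int)"
      apply (rule exI[of _ "a * p + q"], rule exI[of _ p], rule exI[of _ "a * p' + q'"], rule exI[of _ p'])
      using H a1 conv xe det ap by (simp add: add_nonneg_nonneg)
  qed
qed

lemma conv_approx:
  assumes "x \<notin> \<rat>" "x > 1"
  shows "\<exists>(p::int) (q::int). q \<ge> (1::int) \<and> convergent x n = p / q \<and> \<bar>x - p / q\<bar> < 1 / (of_int q)^2"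
proof -
  obtain p q p' q' :: int where H: "q \<ge> 1" "p \<ge> 1" "p' \<ge> 0" "q' \<ge> 0"
      "convergent x n = p / q" "x = (p * cf_rem x (Suc n) + p') / (q * cf_rem x (Suc n) + q')"
      "\<bar>p * q' - p' * q\<bar> = (1::int)"
    using claim[rule_format, OF assms] by blast
  define b where "b = cf_rem x (Suc n)"
  have b1: "b > 1" unfolding b_def using cf_rem_gt1[OF assms(1)] by blast
  have qpos: "(q::real) \<ge> 1" using H by simp
  have "q * b > q" using b1 qpos by simp
  moreover have "(of_int q' :: real) \<ge> 0" using H(4) by simp
  ultimately have D: "q * b + q' > q" by linarith
  have xe: "x = (p * b + p') / (q * b + q')" using H(6) unfolding b_def .
  have Dn: "(q * b + q') \<noteq> 0" "(of_int q::real) \<noteq> 0" using D qpos by auto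
  have "x - p / q = ((p * b + p') * q - p * (q * b + q')) / ((q * b + q') * q)"
    unfolding xe using Dn by (simp add: diff_frac_eq)
  also have "(p * b + p') * q - p * (q * b + q') = (of_int (p' * q - p * q') :: real)"
    by (simp add: algebra_simps)
  finally have "x - p / q = (of_int (p' * q - p * q')) / (q * (q * b + q'))"
    by (simp add: mult.commute)
  moreover have "\<bar>(of_int (p' * q - p * q') :: real)\<bar> = 1"
    using H(7) by (metis abs_minus_commute of_int_1 of_int_abs)
  ultimately have "\<bar>x - p / q\<bar> = 1 / (q * (q * b + q'))"
    using D qpos by (simp only: abs_divide abs_mult)
  also have "\<dots> < 1 / (of_int q)^2"
    using D qpos by (intro divide_strict_left_mono) (auto simp: power2_eq_square)
  finally show ?thesis using H by blast
qed



lemma e_sums: "(\<lambda>n. 1 / fact n) sums (exp 1 :: real)"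
  using exp_converges[of "1::real"] by (simp add: divide_inverse)

lemma e_partial_alt: "e_partial m = sum (\<lambda>n. 1 / fact n) {..<Suc m}"
  unfolding e_partial_def by (simp add: atLeast0AtMost lessThan_Suc_atMost)

lemma e_tail: "exp 1 - e_partial m = (\<Sum>j. 1 / fact (j + Suc m))"
  using suminf_split_initial_segment[OF sums_summable[OF e_sums], of "Suc m"]
    sums_unique[OF e_sums] by (simp add: e_partial_alt)

lemma tail_summable: "summable (\<lambda>j. 1 / (fact (j + Suc m) :: real))"
  using summable_ignore_initial_segment[OF sums_summable[OF e_sums], of "Suc m"] by simp

lemma e_tail_lower: "exp 1 - e_partial m > 1 / fact (Suc m)"
proof -
  have "sum (\<lambda>j. 1 / (fact (j + Suc m) :: real)) {..<2} < (\<Sum>j. 1 / fact (j + Suc m))"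
    by (rule sum_less_suminf[OF tail_summable]) simp
  moreover have "sum (\<lambda>j. 1 / (fact (j + Suc m) :: real)) {..<2} > 1 / fact (Suc m)"
    by (simp add: numeral_2_eq_2)
  ultimately show ?thesis using e_tail by simp
qed

lemma fact_geom: "(fact (Suc m) :: nat) * (m + 2) ^ j \<le> fact (j + Suc m)"
proof (induction j)
  case 0 then show ?case by simp
next
  case (Suc j)
  have "(fact (Suc m) :: nat) * (m + 2) ^ Suc j = (m + 2) * (fact (Suc m) * (m + 2) ^ j)" by (metis mult.assoc mult.commute power_Suc)
  also have "\<dots> \<le> (Suc j + Suc m) * fact (j + Suc m)"
    using Suc.IH by (intro mult_mono) auto
  also have "\<dots> = fact (Suc j + Suc m)" by simp
  finally show ?case .
qed

lemma e_tail_upper: "exp 1 - e_partial m \<le> (real m + 2) / (fact (Suc m) * (real m + 1))"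
proof -
  define r :: real where "r = 1 / (m + 2)"
  have r: "norm r < 1" "r \<ge> 0" unfolding r_def by auto
  have gs: "(\<lambda>j. (1 / fact (Suc m)) * r ^ j) sums ((1 / fact (Suc m)) * (1 / (1 - r)))"
    by (rule sums_mult[OF geometric_sums[OF r(1)]])
  have le: "1 / (fact (j + Suc m) :: real) \<le> (1 / fact (Suc m)) * r ^ j" for j
  proof -
    have "real (fact (Suc m) * (m + 2) ^ j) \<le> real (fact (j + Suc m))"
      by (simp only: of_nat_le_iff fact_geom)
    then have A: "(fact (Suc m) :: real) * (real m + 2) ^ j \<le> fact (j + Suc m)"
      by (simp only: of_nat_mult of_nat_power of_nat_fact of_nat_add of_nat_numeral)
    have pos: "(fact (Suc m) :: real) * (real m + 2) ^ j > 0" by simp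
    have p2: "(fact (j + Suc m)::real) * ((fact (Suc m) :: real) * (real m + 2) ^ j) > 0"
      by (rule mult_pos_pos[OF _ pos]) simp
    have "1 / (fact (j + Suc m) :: real) \<le> 1 / ((fact (Suc m) :: real) * (real m + 2) ^ j)"
      by (rule divide_left_mono[OF A zero_le_one p2])
    also have "\<dots> = (1 / fact (Suc m)) * r ^ j" by (simp add: r_def power_divide add.commute)
    finally show ?thesis .
  qed
  have "(\<Sum>j. 1 / (fact (j + Suc m) :: real)) \<le> (1 / fact (Suc m)) * (1 / (1 - r))"
    using suminf_le[OF le tail_summable sums_summable[OF gs]] sums_unique[OF gs] by simp
  also have "(1 / fact (Suc m)) * (1 / (1 - r)) = (real m + 2) / (fact (Suc m) * (real m + 1))"
    unfolding r_def by (simp add: field_simps)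
  finally show ?thesis by (simp only: e_tail)
qed

fun NN :: "nat \<Rightarrow> nat" where
  "NN 0 = 1"
| "NN (Suc m) = Suc m * NN m + 1"

lemma aux: "(F::real) > 0 \<Longrightarrow> c > 0 \<Longrightarrow> N / F + 1 / (c * F) = (c * N + 1) / (c * F)"
  by (simp add: field_simps)

lemma e_partial_NN: "e_partial m = real (NN m) / fact m"
proof (induction m)
  case 0 then show ?case by (simp add: e_partial_def)
next
  case (Suc m)
  have "e_partial (Suc m) = e_partial m + 1 / fact (Suc m)"
    by (simp add: e_partial_def)
  also have "\<dots> = real (NN m) / fact m + 1 / fact (Suc m)" using Suc.IH by simp
  also have "\<dots> = real (NN (Suc m)) / fact (Suc m)"
  proof -
    have f: "(fact (Suc m)::real) = (real m + 1) * fact m" by (simp add: algebra_simps)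
    have n: "real (NN (Suc m)) = (real m + 1) * real (NN m) + 1" by (simp add: algebra_simps)
    show ?thesis unfolding f n by (rule aux) auto
  qed
  finally show ?case .
qed

lemma e_irr: "(exp 1::real) \<notin> \<rat>"
proof
  assume "(exp 1::real) \<in> \<rat>"
  then obtain a :: int and bi :: int where abi: "bi > 0" "(exp 1::real) = of_int a / of_int bi"
    by (auto elim!: Rats_cases')
  define b where "b = nat bi"
  have ab: "b > 0" "(exp 1::real) = of_int a / of_nat b" using abi by (auto simp: b_def)
  define k :: int where "k = a * int (fact (b - 1)) - int (NN b)"
  have fb: "(fact b :: real) = of_nat b * fact (b - 1)"
    by (rule fact_reduce[OF ab(1)])
  have 1: "fact b * e_partial b = real (NN b)" by (simp add: e_partial_NN)
  have bne: "real b \<noteq> 0" using ab(1) by simp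
  have 2: "fact b * (exp 1::real) = of_int a * fact (b - 1)"
    unfolding fb ab(2) using bne by simp
  have "fact b * (exp 1 - e_partial b) = of_int a * fact (b - 1) - real (NN b)"
    by (simp only: right_diff_distrib 1 2)
  then have kk: "fact b * (exp 1 - e_partial b) = of_int k"
    by (simp add: k_def)
  have "fact b * (exp 1 - e_partial b) > fact b * (1 / fact (Suc b))"
    using e_tail_lower by (intro mult_strict_left_mono) auto
  moreover have "fact b * (1 / fact (Suc b)) > (0::real)" by simp
  moreover have "fact b * (exp 1 - e_partial b) \<le> fact b * ((real b + 2) / (fact (Suc b) * (real b + 1)))"
    using e_tail_upper by (intro mult_left_mono) auto
  moreover have "fact b * ((real b + 2) / (fact (Suc b) * (real b + 1))) = (real b + 2) / ((real b + 1) * (real b + 1))"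
  proof -
    have fs: "(fact (Suc b)::real) = (real b + 1) * fact b" by simp
    have "(fact b :: real) \<noteq> 0" by simp
    moreover have "real b + 1 \<noteq> 0" by simp
    ultimately show ?thesis unfolding fs by (simp add: divide_simps del: fact_Suc)
  qed
  moreover have "(real b + 2) / ((real b + 1) * (real b + 1)) < 1"
  proof -
    have b1: "real b \<ge> 1" using ab(1) by simp
    have "real b * real b \<ge> 1 * 1" by (rule mult_mono) (use b1 in auto)
    then have lt: "real b + 2 < (real b + 1) * (real b + 1)" using b1 by (simp add: algebra_simps)
    have pos: "(real b + 1) * (real b + 1) > 0" by simp
    show ?thesis using lt pos by (simp only: divide_less_eq_1_pos)
  qed
  ultimately have "of_int k < (1::real)" "of_int k > (0::real)" using kk by linarith+
  then show False by simp
qed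


lemma e_gt1: "exp 1 > (1::real)" by simp
lemma NN3: "NN 3 = 16" by (simp add: numeral_eq_Suc)
lemma f34: "(fact 3::real) = 6" "(fact 4::real) = 24" by (simp_all add: fact_numeral)
lemma s3: "e_partial 3 = 8/3" by (simp add: e_partial_NN NN3 f34)
lemma e_bounds: "exp 1 > (8/3::real)" "exp 1 < (11/4::real)"
proof -
  have "exp 1 - e_partial 3 > 1 / fact (4::nat)" using e_tail_lower[of 3] by (simp add: numeral_eq_Suc del: fact_Suc)
  then show "exp 1 > (8/3::real)" using s3 f34 by simp
  have "exp 1 - e_partial 3 \<le> (real 3 + 2) / (fact (4::nat) * (real 3 + 1))"
    using e_tail_upper[of 3] by (simp add: numeral_eq_Suc del: fact_Suc)
  then show "exp 1 < (11/4::real)" using s3 f34 by simp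
qed


lemma crit:
  assumes "is_convergent_of (exp 1) (e_partial m)"
  shows "(fact m::nat)^2 < (gcd (NN m) (fact m))^2 * fact (Suc m)"
proof -
  obtain k where k: "e_partial m = convergent (exp 1) k"
    using assms unfolding is_convergent_of_def by blast
  obtain p q :: int where pq: "q \<ge> 1" "convergent (exp 1) k = p / q" "\<bar>exp 1 - p / q\<bar> < 1 / (of_int q)^2"
    using conv_approx[OF e_irr e_gt1] by blast
  have eq: "real (NN m) / fact m = p / q" using k pq(2) e_partial_NN by simp
  have "1 / fact (Suc m) < exp 1 - e_partial m" by (rule e_tail_lower)
  also have "\<dots> \<le> \<bar>exp 1 - p / q\<bar>" using k pq(2) by simp
  also have "\<dots> < 1 / (of_int q)^2" by (rule pq(3))
  finally have "1 / fact (Suc m) < 1 / (of_int q :: real)^2" .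
  then have "(of_int q :: real)^2 < fact (Suc m)"
    using pq(1) by (simp add: divide_less_eq_1_pos frac_less2 less_divide_eq)
  then have qf: "q^2 < int (fact (Suc m))"
    by (metis of_int_less_iff of_int_of_nat_eq of_int_power of_nat_fact)
  have "real (NN m) * q = p * fact m"
    using eq pq(1) by (simp add: field_simps)
  then have "real_of_int (int (NN m) * q) = real_of_int (p * int (fact m))"
    by simp
  then have eqi: "int (NN m) * q = p * int (fact m)" by (simp only: of_int_eq_iff)
  define g where "g = gcd (NN m) (fact m)"
  define F where "F = fact m div g"
  define A where "A = NN m div g"
  have gpos: "g > 0" unfolding g_def by (simp add: gcd_pos_nat)
  have Fg: "fact m = F * g" unfolding F_def g_def by simp
  have Ag: "NN m = A * g" unfolding A_def g_def by simp
  have cop: "coprime A F" unfolding A_def F_def g_def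
    by (rule div_gcd_coprime) simp
  have "int A * q * int g = p * int F * int g" using eqi unfolding Fg Ag by (simp add: ac_simps)
  then have "int A * q = p * int F" using gpos by simp
  then have "int F dvd int A * q" by (metis dvd_triv_right)
  moreover have "coprime (int F) (int A)" using cop by (simp add: coprime_commute)
  ultimately have "int F dvd q" using coprime_dvd_mult_right_iff by blast
  then have Fq: "int F \<le> q" using pq(1) by (simp add: zdvd_imp_le)
  have "int (fact m ^ 2) = (int F)^2 * (int g)^2" unfolding Fg by (simp add: power_mult_distrib)
  also have "\<dots> \<le> q^2 * (int g)^2"
    using Fq by (intro mult_right_mono power_mono) auto
  also have "\<dots> < int (fact (Suc m)) * (int g)^2"
    using qf gpos by (intro mult_strict_right_mono) auto
  finally have "int (fact m ^ 2) < int (g^2 * fact (Suc m))" by (simp add: ac_simps)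
  then show ?thesis unfolding g_def by (simp only: of_nat_less_iff)
qed



lemma alg:
  fixes F X Y Z a b c :: nat
  assumes h1: "F^2 < a^2*(X*F)" and h2: "(X*F)^2 < b^2*(Y*X*F)" and h3: "(Y*X*F)^2 < c^2*(Z*Y*X*F)"
    and h4: "a*b*c \<le> Y*X*F*Z" and h5: "Z^3*Y^2*X \<le> F"
  shows False
proof -
  have r1: "F^2*(X*F)^2 < (a^2*(X*F))*(b^2*(Y*X*F))"
    by (rule mult_strict_mono[OF h1 h2 le_less_trans[OF zero_le h1]]) simp
  have "F^2*(X*F)^2*(Y*X*F)^2 < (a^2*(X*F))*(b^2*(Y*X*F))*(c^2*(Z*Y*X*F))"
    by (rule mult_strict_mono[OF r1 h3 le_less_trans[OF zero_le r1]]) simp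
  also have "\<dots> = (a*b*c)^2 * (X*F*(Y*X*F)*(Z*Y*X*F))" by (simp add: algebra_simps power_mult_distrib)
  also have "\<dots> \<le> (Y*X*F*Z)^2 * (X*F*(Y*X*F)*(Z*Y*X*F))"
    by (intro mult_right_mono power_mono h4) auto
  also have "\<dots> = (F^5 * X^4 * Y^2) * (Z^3*Y^2*X)" by (simp add: algebra_simps power_mult_distrib power2_eq_square power3_eq_cube eval_nat_numeral)
  also have "\<dots> \<le> (F^5 * X^4 * Y^2) * F" by (rule mult_left_mono[OF h5]) simp
  also have "\<dots> = F^2*(X*F)^2*(Y*X*F)^2" by (simp add: algebra_simps power_mult_distrib power2_eq_square eval_nat_numeral)
  finally show False by simp
qed

lemma cube2: "(2*m::nat)^3 = (8*m)*m^2" by (simp add: power3_eq_cube power2_eq_square)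

lemma fact_big: "n \<ge> 10 \<Longrightarrow> (n+3)^3*(n+2)^2*(n+1) \<le> fact n"
proof (induction n rule: dec_induct)
  case base
  then show ?case by (simp add: fact_numeral)
next
  case (step n)
  have A: "(n+4)^3 \<le> (n+1)^2*(n+3)*(n+2)"
  proof -
    have "(n+4) \<le> 2*(n+2)" by simp
    then have "(n+4)^3 \<le> (2*(n+2))^3" by (rule power_mono) simp
    also have "\<dots> = (8*(n+2))*(n+2)^2" by (rule cube2)
    also have "\<dots> \<le> (n+1)^2*(n+2)^2"
    proof (rule mult_right_mono)
      have "(n+1)*(n+1) \<ge> 11*(n+1)" using step(1) by (intro mult_right_mono) auto
      then show "8*(n+2) \<le> (n+1)^2" using step(1) by (simp add: power2_eq_square)
    qed simp
    also have "\<dots> \<le> (n+1)^2*(n+3)*(n+2)"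
    proof -
      have "(n+2)^2 \<le> (n+3)*(n+2)" unfolding power2_eq_square by (rule mult_right_mono) simp_all
      then have "(n+1)^2*(n+2)^2 \<le> (n+1)^2*((n+3)*(n+2))" by (rule mult_left_mono) simp
      then show ?thesis by (simp only: mult.assoc)
    qed
    finally show ?thesis .
  qed
  have e3: "Suc n + 3 = n+4" "Suc n+2 = n+3" "Suc n + 1 = n+2" by simp_all
  have "(Suc n+3)^3*(Suc n+2)^2*(Suc n+1) = (n+4)^3*(n+3)^2*(n+2)" by (simp only: e3)
  also have "\<dots> \<le> ((n+1)^2*(n+3)*(n+2))*(n+3)^2*(n+2)"
    using A by (intro mult_right_mono) auto
  also have "\<dots> = (n+1) * ((n+3)^3*(n+2)^2*(n+1))" by (simp add: algebra_simps power2_eq_square power3_eq_cube)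
  also have "\<dots> \<le> (n+1) * fact n" using step(3) by (rule mult_left_mono) simp
  also have "\<dots> = fact (Suc n)" by simp
  finally show ?case .
qed



lemma cop_NN: "coprime (NN m) (NN (Suc m))"
  unfolding coprime_def
proof (intro allI impI)
  fix c assume c: "c dvd NN m" "c dvd NN (Suc m)"
  have "c dvd Suc m * NN m" using c(1) by (rule dvd_mult)
  moreover have "c dvd Suc m * NN m + 1" using c(2) by (simp only: NN.simps)
  ultimately have "c dvd 1" by (simp only: dvd_add_right_iff)
  then show "is_unit c" by simp
qed

lemma dvd_NN2: "d dvd NN m \<Longrightarrow> d dvd NN (Suc (Suc m)) \<Longrightarrow> d dvd (m + 3)"
proof -
  assume d: "d dvd NN m" "d dvd NN (Suc (Suc m))"
  have e: "NN (Suc (Suc m)) = ((m+2)*(m+1))*NN m + (m+3)" by (simp add: algebra_simps)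
  have "d dvd ((m+2)*(m+1))*NN m" using d(1) by (rule dvd_mult)
  moreover have "d dvd ((m+2)*(m+1))*NN m + (m+3)" using d(2) unfolding e .
  ultimately show ?thesis by (simp only: dvd_add_right_iff)
qed

definition gg :: "nat \<Rightarrow> nat" where "gg m = gcd (NN m) (fact m)"

lemma prod_bound: "gg n * gg (Suc n) * gg (Suc (Suc n)) \<le> (n+2)*(n+1)*fact n*(n+3)"
proof -
  define a where "a = gg n"
  define b where "b = gg (Suc n)"
  define c where "c = gg (Suc (Suc n))"
  define F where "F = (fact (Suc (Suc n)) :: nat)"
  have Fpos: "F > 0" unfolding F_def by simp
  have aF: "a dvd F" unfolding a_def F_def gg_def
    by (rule dvd_trans[OF gcd_dvd2 fact_dvd]) simp
  have bF: "b dvd F" unfolding b_def F_def gg_def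
    by (rule dvd_trans[OF gcd_dvd2 fact_dvd]) simp
  have cF: "c dvd F" unfolding c_def F_def gg_def by simp
  have ab: "coprime b a" unfolding a_def b_def gg_def
    by (rule coprime_divisors[OF gcd_dvd1 gcd_dvd1]) (use cop_NN[of n] in \<open>simp only: coprime_commute\<close>)
  have bc: "coprime b c" unfolding c_def b_def gg_def
    by (rule coprime_divisors[OF gcd_dvd1 gcd_dvd1]) (rule cop_NN)
  have gac: "gcd a c dvd n + 3" unfolding a_def c_def gg_def
    by (rule dvd_NN2) (meson dvd_trans gcd_dvd1 gcd_dvd2)+
  then have gac': "gcd a c \<le> n + 3" by (rule dvd_imp_le) simp
  have lF: "lcm a c dvd F" using aF cF by (rule lcm_least)
  have "coprime b (a * c)" using ab bc by simp
  then have bl: "coprime b (lcm a c)" by (rule coprime_divisors[OF dvd_refl lcm_least[OF dvd_triv_left dvd_triv_right]])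
  have "b * lcm a c dvd F" by (rule divides_mult[OF bF lF bl])
  then have bleF: "b * lcm a c \<le> F" using Fpos by (rule dvd_imp_le)
  have "a * b * c = b * (gcd a c * lcm a c)" by (simp add: prod_gcd_lcm_nat[symmetric] ac_simps)
  also have "\<dots> \<le> b * ((n+3) * lcm a c)" using gac' by (intro mult_left_mono mult_right_mono) auto
  also have "\<dots> = (b * lcm a c) * (n+3)" by (simp add: ac_simps)
  also have "\<dots> \<le> F * (n+3)" using bleF by (rule mult_right_mono) simp
  also have "F = (n+2)*(n+1)*fact n" unfolding F_def by (simp add: algebra_simps)
  finally show ?thesis unfolding a_def b_def c_def .
qed

lemma big_case:
  assumes n: "n \<ge> 10" and h: "is_convergent_of (exp 1) (e_partial n)"
    "is_convergent_of (exp 1) (e_partial (Suc n))" "is_convergent_of (exp 1) (e_partial (Suc (Suc n)))"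
  shows False
proof -
  define F where "F = (fact n :: nat)"
  have f1: "(fact (Suc n)::nat) = (n+1)*F" unfolding F_def by simp
  have f2: "(fact (Suc (Suc n))::nat) = (n+2)*(n+1)*F" unfolding F_def by (simp add: algebra_simps)
  have f3: "(fact (Suc (Suc (Suc n)))::nat) = (n+3)*(n+2)*(n+1)*F" unfolding F_def by (simp add: algebra_simps)
  have c1: "F^2 < (gg n)^2*((n+1)*F)" using crit[OF h(1)] unfolding gg_def f1 F_def .
  have c2: "((n+1)*F)^2 < (gg (Suc n))^2*((n+2)*(n+1)*F)" using crit[OF h(2)] unfolding gg_def f1 f2 .
  have c3: "((n+2)*(n+1)*F)^2 < (gg (Suc (Suc n)))^2*((n+3)*(n+2)*(n+1)*F)"
    using crit[OF h(3)] unfolding gg_def f2 f3 .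
  have pb: "gg n * gg (Suc n) * gg (Suc (Suc n)) \<le> (n+2)*(n+1)*F*(n+3)"
    using prod_bound unfolding F_def .
  have fb: "(n+3)^3*(n+2)^2*(n+1) \<le> F" unfolding F_def by (rule fact_big[OF n])
  show False by (rule alg[OF c1 c2 c3 pb fb])
qed



lemma conv_ge_digit: "x \<notin> \<rat> \<Longrightarrow> convergent x j \<ge> of_int (cf_digit x 0)"
proof (induction j arbitrary: x)
  case 0 then show ?case by (simp add: convergent_0)
next
  case (Suc j)
  have yi: "cf_rem x 1 \<notin> \<rat>" "cf_rem x 1 > 1" using irr_step[OF Suc.prems] by simp_all
  have "convergent (cf_rem x 1) j \<ge> of_int (cf_digit (cf_rem x 1) 0)" by (rule Suc.IH[OF yi(1)])
  moreover have "of_int (cf_digit (cf_rem x 1) 0) \<ge> (1::real)"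
    using yi(2) unfolding cf_digit_def by simp
  ultimately have "convergent (cf_rem x 1) j > 0" by linarith
  then show ?case by (simp add: convergent_Suc)
qed

lemma not_52: "\<not> is_convergent_of (exp 1) (5/2)"
proof
  assume "is_convergent_of (exp 1) (5/2)"
  then obtain k where k: "5/2 = convergent (exp 1) k" unfolding is_convergent_of_def by blast
  define e :: real where "e = exp 1"
  have k': "5/2 = convergent e k" using k unfolding e_def .
  have eb: "e > 8/3" "e < 11/4" using e_bounds unfolding e_def by auto
  define y where "y = cf_rem e 1"
  define z where "z = cf_rem y 1"
  have d0: "cf_digit e 0 = 2" unfolding cf_digit_def using eb by (simp add: floor_eq_iff)
  have ydef: "y = 1 / (e - 2)" unfolding y_def using d0 by (simp add: cf_digit_def)
  have yb: "y > 4/3" "y < 3/2" unfolding ydef using eb by (simp_all add: field_simps)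
  have d1: "cf_digit y 0 = 1" unfolding cf_digit_def using yb by (simp add: floor_eq_iff)
  have zdef: "z = 1 / (y - 1)" unfolding z_def using d1 by (simp add: cf_digit_def)
  have zb: "z > 2" "z < 3" unfolding zdef using yb by (simp_all add: field_simps)
  have d2: "cf_digit z 0 = 2" unfolding cf_digit_def using zb by (simp add: floor_eq_iff)
  have ei: "e \<notin> \<rat>" unfolding e_def by (rule e_irr)
  have yi: "y \<notin> \<rat>" unfolding y_def using irr_step[OF ei] by simp
  have zi: "z \<notin> \<rat>" unfolding z_def using irr_step[OF yi] by simp
  show False
  proof (cases k)
    case 0
    then show False using k' d0 by (simp add: convergent_0)
  next
    case (Suc k1)
    show False
    proof (cases k1)
      case 0
      then show False using k' d0 d1 Suc by (simp add: convergent_Suc convergent_0 y_def)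
    next
      case (Suc k2)
      have cz: "convergent z k2 \<ge> 2" using conv_ge_digit[OF zi, of k2] d2 by simp
      have cy: "convergent y (Suc k2) = 1 + 1 / convergent z k2"
        by (simp add: convergent_Suc d1 z_def)
      have "1 / convergent z k2 \<le> 1/2" using cz by (simp add: field_simps)
      moreover have "1 / convergent z k2 > 0" using cz by simp
      ultimately have cyb: "convergent y (Suc k2) \<le> 3/2" "convergent y (Suc k2) > 0" using cy by linarith+
      have ce: "convergent e k = 2 + 1 / convergent y (Suc k2)"
        using \<open>k = Suc k1\<close> Suc by (simp add: convergent_Suc d0 y_def)
      have "1 / convergent y (Suc k2) \<ge> 2/3" using cyb by (simp add: field_simps)
      then have "convergent e k \<ge> 8/3" using ce by linarith
      then show False using k' by simp
    qed
  qed
qed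



lemma NN_num: "NN (numeral k) = numeral k * NN (pred_numeral k) + 1"
  by (simp only: numeral_eq_Suc NN.simps)

lemma NN_vals: "NN 4 = 65" "NN 6 = 1957" "NN 8 = 109601" "NN 10 = 9864101"
  by (simp_all add: NN_num)

lemma no_conv:
  assumes "m \<in> {0, 4, 6, 8, 10}"
  shows "\<not> is_convergent_of (exp 1) (e_partial m)"
proof
  assume "is_convergent_of (exp 1) (e_partial m)"
  then have c: "(fact m::nat)^2 < (gcd (NN m) (fact m))^2 * fact (Suc m)" by (rule crit)
  show False using assms c
    by (auto simp: NN_vals fact_numeral gcd_non_0_nat)
qed

theorem theorem3p1:
  fixes n :: nat
  shows "\<not> (is_convergent_of (exp 1) (e_partial n) \<and>
            is_convergent_of (exp 1) (e_partial (n + 1)) \<and>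
            is_convergent_of (exp 1) (e_partial (n + 2)))"
proof
  assume H: "is_convergent_of (exp 1) (e_partial n) \<and>
            is_convergent_of (exp 1) (e_partial (n + 1)) \<and>
            is_convergent_of (exp 1) (e_partial (n + 2))"
  have H1: "is_convergent_of (exp 1) (e_partial m)" if "m \<in> {n, n+1, n+2}" for m
    using H that by auto
  consider "n = 0" | "n = 1" | "n \<in> {2,3,4}" | "n \<in> {5,6}" | "n \<in> {7,8}" | "n = 9" | "n \<ge> 10"
    by force
  then show False
  proof cases
    case 1 then show ?thesis using H1[of 0] no_conv[of 0] by simp
  next
    case 2
    have s2: "e_partial 2 = 5/2" by (simp add: e_partial_NN numeral_eq_Suc)
    have "is_convergent_of (exp 1) (e_partial 2)" using H1[of 2] 2 by simp
    then have "is_convergent_of (exp 1) (5/2)" by (simp only: s2)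
    then show ?thesis using not_52 by contradiction
  next
    case 3 then show ?thesis using H1[of 4] no_conv[of 4] by auto
  next
    case 4 then show ?thesis using H1[of 6] no_conv[of 6] by auto
  next
    case 5 then show ?thesis using H1[of 8] no_conv[of 8] by auto
  next
    case 6 then show ?thesis using H1[of 10] no_conv[of 10] by auto
  next
    case 7 then show ?thesis using big_case[of n] H by simp
  qed
qed

end
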